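(* Let $n \geq 2$, $k \geq 1$, $M_1, \dots, M_k \in \mathrm{GL}_n(\mathbb{R})$, $\mathbf g_1, \dots, \mathbf g_k \in \mathbb{R}^n$, $G_i := M_i \cdot \mathbb{Z}^n + \mathbf g_i$ for $1 \le i \le k$, and $F := \bigcup_{i=1}^k G_i$. Let $\mathbf b \in \mathbb{S}^{n-1}$. The following are equivalent. \begin{enumerate} \item $\phi_\varepsilon[F](\mathbf x, \mathbf b)$ is well defined for all $\varepsilon > 0$ and all $\mathbf x \in \mathbb{R}^n$. \item There is an index $i \in \{1, \dots, k\}$ such that $\phi_\varepsilon[G_i](\mathbf x, \mathbf b)$ is well defined for all $\varepsilon > 0$ and all $\mathbf x \in \mathbb{R}^n$. \item At least one of the vectors $M_1^{-1}\mathbf b, \dots, M_k^{-1}\mathbf b$ has rationally independent components. \end{enumerate}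
   Context: For $\mathbf a \in \mathbb{R}^n$, $\mathbf b \in \mathbb{S}^{n-1}$, $l > 0$, let $L(\mathbf a, \mathbf b, l) := \{\mathbf a + \lambda \mathbf b : -l \le \lambda \le l\}$. For $S \subset \mathbb{R}^n$ and $\varepsilon > 0$, the directional visibility function is \[ \phi_\varepsilon[S](\mathbf a, \mathbf b) := \inf\Big\{ l > 0 : L(\mathbf a, \mathbf b, l) \cap \bigcup_{\mathbf s \in S} B_2(\mathbf s, \varepsilon) \neq \varnothing \Big\}, \] where $B_2(\mathbf s,\varepsilon)$ is the open Euclidean ball; it is called well defined at $(\mathbf a, \mathbf b)$ when the set over which the infimum is taken is nonempty. A vector $\mathbf v \in \mathbb{R}^n$ has rationally independent components if there is no $\mathbf q \in \mathbb{Z}^n \setminus \{\mathbf 0\}$ with $\mathbf q \cdot \mathbf v = 0$. *)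

theory Defs
  imports "HOL-Analysis.Analysis"
begin

definition seg :: "real^'n \<Rightarrow> real^'n \<Rightarrow> real \<Rightarrow> (real^'n) set" where
  "seg a b l = {a + t *\<^sub>R b | t. -l \<le> t \<and> t \<le> l}"

definition vis_set :: "(real^'n) set \<Rightarrow> real \<Rightarrow> real^'n \<Rightarrow> real^'n \<Rightarrow> real set" where
  "vis_set S \<epsilon> a b = {l. l > 0 \<and> seg a b l \<inter> (\<Union>s\<in>S. ball s \<epsilon>) \<noteq> {}}"

definition dir_vis :: "(real^'n) set \<Rightarrow> real \<Rightarrow> real^'n \<Rightarrow> real^'n \<Rightarrow> real" where
  "dir_vis S \<epsilon> a b = Inf (vis_set S \<epsilon> a b)"

definition dir_vis_well_defined :: "(real^'n) set \<Rightarrow> real \<Rightarrow> real^'n \<Rightarrow> real^'n \<Rightarrow> bool" where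
  "dir_vis_well_defined S \<epsilon> a b \<longleftrightarrow> vis_set S \<epsilon> a b \<noteq> {}"

definition rationally_independent :: "real^'n \<Rightarrow> bool" where
  "rationally_independent v \<longleftrightarrow>
     \<not> (\<exists>q::int^'n. q \<noteq> 0 \<and> (\<Sum>i\<in>UNIV. of_int (q $ i) * v $ i) = 0)"

definition shifted_lattice :: "real^'n^'n \<Rightarrow> real^'n \<Rightarrow> (real^'n) set" where
  "shifted_lattice M g = {M *v (\<chi> j. of_int (z $ j)) + g | z::int^'n. True}"

end

theory Submission
  imports Defs "HOL-Analysis.Kronecker_Approximation_Theorem"
begin

lemma minv:
  fixes M :: "real^'n^'n"
  assumes "invertible M"
  shows "M ** matrix_inv M = mat 1" "matrix_inv M ** M = mat 1"
proof -
  have "\<exists>A'. M ** A' = mat 1 \<and> A' ** M = mat 1" using assms by (simp add: invertible_def)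
  from someI_ex[OF this] show "M ** matrix_inv M = mat 1" "matrix_inv M ** M = mat 1"
    by (simp_all add: matrix_inv_def)
qed

lemma dwd_iff:
  "dir_vis_well_defined S e x b \<longleftrightarrow> (\<exists>t. \<exists>s\<in>S. dist s (x + t *\<^sub>R b) < e)"
proof
  assume "dir_vis_well_defined S e x b"
  then obtain l where "l > 0" "seg x b l \<inter> (\<Union>s\<in>S. ball s e) \<noteq> {}"
    by (auto simp: dir_vis_well_defined_def vis_set_def)
  then show "\<exists>t. \<exists>s\<in>S. dist s (x + t *\<^sub>R b) < e"
    by (auto simp: seg_def)
next
  assume "\<exists>t. \<exists>s\<in>S. dist s (x + t *\<^sub>R b) < e"
  then obtain t s where ts: "s \<in> S" "dist s (x + t *\<^sub>R b) < e" by blast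
  have "x + t *\<^sub>R b \<in> seg x b (\<bar>t\<bar> + 1)" unfolding seg_def by force
  then have "\<bar>t\<bar> + 1 \<in> vis_set S e x b" using ts unfolding vis_set_def by force
  then show "dir_vis_well_defined S e x b" by (auto simp: dir_vis_well_defined_def)
qed


lemma ri_kron:
  fixes v y :: "real^'n"
  assumes ri: "rationally_independent v" and e: "e > 0"
  obtains t and z :: "int^'n" where "\<And>j. \<bar>y $ j + t * v $ j - of_int (z $ j)\<bar> < e"
proof -
  define N where "N = CARD('n)"
  obtain f where f: "bij_betw f {0..<N} (UNIV::'n set)"
    using ex_bij_betw_nat_finite[of "UNIV::'n set"] unfolding N_def by auto
  define \<theta> where "\<theta> i = v $ f i" for i
  define \<alpha> where "\<alpha> i = - (y $ f i)" for i
  have img: "\<theta> ` {..<N} = range (\<lambda>j. v $ j)"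
    using f unfolding \<theta>_def bij_betw_def by (auto simp: atLeast0LessThan image_image[symmetric])
  have injv: "inj (\<lambda>j. v $ j)"
  proof (rule injI)
    fix i j assume eq: "v $ i = v $ j"
    show "i = j"
    proof (rule ccontr)
      assume ne: "i \<noteq> j"
      define q :: "int^'n" where "q = (\<chi> m. if m = i then 1 else if m = j then -1 else 0)"
      have "q \<noteq> 0" using ne by (auto simp: q_def vec_eq_iff)
      moreover have "(\<Sum>m\<in>UNIV. of_int (q $ m) * v $ m) = 0"
      proof -
        have "(\<Sum>m\<in>UNIV. of_int (q $ m) * v $ m) = (\<Sum>m\<in>{i,j}. of_int (q $ m) * v $ m)"
          by (rule sum.mono_neutral_right) (auto simp: q_def)
        also have "\<dots> = 0" using ne eq by (simp add: q_def)
        finally show ?thesis .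
      qed
      ultimately show False using ri by (auto simp: rationally_independent_def)
    qed
  qed
  have injt: "inj_on \<theta> {..<N}"
    using f injv unfolding \<theta>_def bij_betw_def inj_on_def by (auto simp: atLeast0LessThan)
  interpret Modules.module "(\<lambda>r. (*) (real_of_int r))"
    by (simp add: Modules.module.intro distrib_left mult.commute)
  have indp: "independent (\<theta> ` {..<N})"
    unfolding independent_explicit_module img
  proof (intro allI impI)
    fix T u w
    assume T: "finite T" "T \<subseteq> range (\<lambda>j. v $ j)" "(\<Sum>w\<in>T. real_of_int (u w) * w) = 0" "w \<in> T"
    define q :: "int^'n" where "q = (\<chi> m. if v $ m \<in> T then u (v $ m) else 0)"
    have "(\<Sum>m\<in>UNIV. of_int (q $ m) * v $ m) = (\<Sum>m\<in>{m. v $ m \<in> T}. of_int (u (v $ m)) * v $ m)"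
      by (rule sum.mono_neutral_cong_right) (auto simp: q_def)
    also have "\<dots> = (\<Sum>w\<in>(\<lambda>m. v $ m) ` {m. v $ m \<in> T}. real_of_int (u w) * w)"
      by (rule sum.reindex[symmetric, unfolded comp_def]) (meson injv inj_on_subset subset_UNIV)
    also have "(\<lambda>m. v $ m) ` {m. v $ m \<in> T} = T" using T by auto
    finally have "(\<Sum>m\<in>UNIV. of_int (q $ m) * v $ m) = 0" using T by simp
    then have "q = 0" using ri by (auto simp: rationally_independent_def)
    moreover obtain m where "w = v $ m" using T by auto
    ultimately show "u w = 0" using T by (auto simp: q_def vec_eq_iff) metis
  qed
  obtain t h where th: "\<And>i. i < N \<Longrightarrow> \<bar>t * \<theta> i - of_int (h i) - \<alpha> i\<bar> < e"
    using Kronecker_thm_1[OF indp injt e] by blast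
  define g where "g = inv_into {0..<N} f"
  define z :: "int^'n" where "z = (\<chi> j. h (g j))"
  show ?thesis
  proof (rule that[of t z])
    fix j
    have "g j \<in> {0..<N}" using f unfolding g_def bij_betw_def
      by (metis UNIV_I inv_into_into)
    moreover have "f (g j) = j" using f unfolding g_def bij_betw_def
      by (metis UNIV_I f_inv_into_f)
    ultimately have gj: "g j < N" "f (g j) = j" by auto
    show "\<bar>y $ j + t * v $ j - of_int (z $ j)\<bar> < e"
      using th[OF gj(1)] gj(2) by (simp add: z_def \<theta>_def \<alpha>_def)
  qed
qed


lemma A1:
  fixes M :: "real^'n^'n"
  assumes inv: "invertible M" and ri: "rationally_independent (matrix_inv M *v b)" and e: "e > 0"
  shows "dir_vis_well_defined (shifted_lattice M g) e x b"
proof -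
  obtain K where K: "K > 0" "\<And>w. norm (M *v w) \<le> norm w * K"
    using bounded_linear.pos_bounded[OF matrix_vector_mul_bounded_linear[of M]] by blast
  define N where "N = real CARD('n)"
  have N: "N > 0" by (simp add: N_def)
  define \<delta> where "\<delta> = e / (K * N)"
  have \<delta>: "\<delta> > 0" using K N e by (simp add: \<delta>_def)
  define v where "v = matrix_inv M *v b"
  define y where "y = matrix_inv M *v (x - g)"
  obtain t and z :: "int^'n" where tz: "\<And>j. \<bar>y $ j + t * v $ j - of_int (z $ j)\<bar> < \<delta>"
    using ri_kron[OF ri[folded v_def] \<delta>, of y] by blast
  define zr :: "real^'n" where "zr = (\<chi> j. of_int (z $ j))"
  define w where "w = y + t *\<^sub>R v - zr"
  have Mv: "M *v v = b" "M *v y = x - g"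
    using minv(1)[OF inv] by (simp_all add: v_def y_def matrix_vector_mul_assoc)
  have eq: "x + t *\<^sub>R b - (M *v zr + g) = M *v w"
    unfolding w_def by (simp add: matrix_vector_right_distrib matrix_vector_mult_diff_distrib
        matrix_vector_mult_scaleR Mv algebra_simps)
  have "norm w \<le> (\<Sum>j\<in>UNIV. \<bar>w $ j\<bar>)" by (rule norm_le_l1_cart)
  also have "\<dots> < (\<Sum>j\<in>(UNIV::'n set). \<delta>)"
    by (rule sum_strict_mono) (auto simp: w_def zr_def tz)
  also have "\<dots> = N * \<delta>" by (simp add: N_def)
  finally have nw: "norm w < N * \<delta>" .
  have "dist (M *v zr + g) (x + t *\<^sub>R b) = norm (M *v w)"
    by (simp add: dist_norm eq[symmetric] norm_minus_commute)
  also have "\<dots> \<le> norm w * K" by (rule K)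
  also have "\<dots> < N * \<delta> * K" using nw K by simp
  also have "\<dots> = e" using K N by (simp add: \<delta>_def)
  finally have "dist (M *v zr + g) (x + t *\<^sub>R b) < e" .
  moreover have "M *v zr + g \<in> shifted_lattice M g"
    unfolding shifted_lattice_def zr_def by blast
  ultimately show ?thesis unfolding dwd_iff by blast
qed


lemma A2:
  fixes M :: "real^'n^'n"
  assumes inv: "invertible M" and nri: "\<not> rationally_independent (matrix_inv M *v b)"
  shows "\<exists>(L::real^'n \<Rightarrow> real) d. bounded_linear L \<and> (\<exists>y. L y \<noteq> 0) \<and> (\<forall>s\<in>shifted_lattice M g. L s + d \<in> \<int>)
            \<and> (\<forall>t. L (t *\<^sub>R b) = 0)"
proof -
  obtain q :: "int^'n" where q: "q \<noteq> 0" "(\<Sum>i\<in>UNIV. of_int (q $ i) * (matrix_inv M *v b) $ i) = 0"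
    using nri by (auto simp: rationally_independent_def)
  define L where "L y = (\<Sum>i\<in>UNIV. of_int (q $ i) * (matrix_inv M *v y) $ i)" for y
  have lin: "linear L"
    by (rule linearI) (simp_all add: L_def matrix_vector_right_distrib matrix_vector_mult_scaleR
        algebra_simps sum.distrib sum_distrib_left)
  have bl: "bounded_linear L" using lin by (simp add: linear_conv_bounded_linear)
  obtain j where j: "q $ j \<noteq> 0" using q(1) by (auto simp: vec_eq_iff)
  have ne: "L (M *v axis j 1) \<noteq> 0"
  proof -
    have "matrix_inv M *v (M *v axis j 1) = axis j 1"
      by (simp add: matrix_vector_mul_assoc minv(2)[OF inv])
    moreover have "(\<Sum>i\<in>UNIV. of_int (q $ i) * (axis j (1::real)) $ i) = of_int (q $ j)"
      by (simp add: axis_def if_distrib cong: if_cong)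
    ultimately show ?thesis using j by (simp add: L_def)
  qed
  have lat: "L s + (- L g) \<in> \<int>" if hs: "s \<in> shifted_lattice M g" for s
  proof -
    obtain z :: "int^'n" where s: "s = M *v (\<chi> j. of_int (z $ j)) + g"
      using hs by (auto simp: shifted_lattice_def)
    have "L s - L g = L (M *v (\<chi> j. of_int (z $ j)))"
      using lin s by (simp add: linear_add)
    also have "\<dots> = (\<Sum>i\<in>UNIV. of_int (q $ i) * of_int (z $ i))"
      by (simp add: L_def matrix_vector_mul_assoc minv(2)[OF inv])
    also have "\<dots> = of_int (\<Sum>i\<in>UNIV. q $ i * z $ i)" by simp
    also have "\<dots> \<in> \<int>" by (rule Ints_of_int)
    finally show ?thesis by simp
  qed
  have zero: "L (t *\<^sub>R b) = 0" for t
    using q(2) by (simp add: L_def matrix_vector_mult_scaleR algebra_simps sum_distrib_left[symmetric])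
  show ?thesis
  proof (rule exI[where x=L], rule exI[where x="- L g"], intro conjI)
    show "bounded_linear L" by (fact bl)
    show "\<exists>y. L y \<noteq> 0" using ne by blast
    show "\<forall>s\<in>shifted_lattice M g. L s + - L g \<in> \<int>" using lat by blast
    show "\<forall>t. L (t *\<^sub>R b) = 0" using zero by blast
  qed
qed


lemma hyper_interior:
  fixes L :: "real^'n \<Rightarrow> real"
  assumes bl: "bounded_linear L" and y: "L y \<noteq> 0"
  shows "interior {x. L x = c} = {}"
proof (rule ccontr)
  assume "interior {x. L x = c} \<noteq> {}"
  then obtain x where "x \<in> interior {x. L x = c}" by blast
  then obtain r where r: "r > 0" "ball x r \<subseteq> {x. L x = c}"
    by (meson mem_interior)
  have y0: "y \<noteq> 0" using y linear_0[OF bounded_linear.linear[OF bl]] by auto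
  define p where "p = x + (r / (2 * norm y)) *\<^sub>R y"
  have "dist x p = r / 2" using y0 r by (simp add: p_def dist_norm)
  then have "p \<in> ball x r" using r by simp
  then have "L p = c" using r(2) by blast
  moreover have "x \<in> ball x r" using r by simp
  then have "L x = c" using r(2) by blast
  ultimately have "L p = L x" by simp
  moreover have "L p = L x + (r / (2 * norm y)) * L y"
    using bounded_linear.linear[OF bl] by (simp add: p_def linear_add linear_cmul)
  ultimately show False using y y0 r by simp
qed

lemma exists_nonint:
  fixes L :: "nat \<Rightarrow> real^'n \<Rightarrow> real"
  assumes fin: "finite I" and bl: "\<And>i. i \<in> I \<Longrightarrow> bounded_linear (L i)"
    and nz: "\<And>i. i \<in> I \<Longrightarrow> \<exists>y. L i y \<noteq> 0"
  shows "\<exists>x. \<forall>i\<in>I. L i x + d i \<notin> \<int>"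
proof -
  define \<G> where "\<G> = (\<lambda>(i, m::int). - {x. L i x = of_int m - d i}) ` (I \<times> UNIV)"
  have cG: "countable \<G>" unfolding \<G>_def
    by (intro countable_image countable_SIGMA) (auto simp: fin countable_finite)
  have "UNIV \<subseteq> closure (\<Inter>\<G>)"
  proof (rule Baire[OF closed_UNIV cG])
    fix T assume "T \<in> \<G>"
    then obtain i m where i: "i \<in> I" and T: "T = - {x. L i x = of_int m - d i}"
      by (auto simp: \<G>_def)
    have "continuous_on UNIV (L i)"
      using bl[OF i] by (simp add: linear_continuous_on)
    then have "closed {x. L i x = of_int m - d i}"
      by (intro closed_Collect_eq continuous_intros) auto
    then have "open T" using T by auto
    moreover have "closure T = UNIV"
      using hyper_interior[OF bl[OF i]] nz[OF i] T by (auto simp: closure_complement)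
    ultimately show "openin (top_of_set UNIV) T \<and> UNIV \<subseteq> closure T" by simp
  qed
  then have "\<Inter>\<G> \<noteq> {}" by auto
  then obtain x where x: "x \<in> \<Inter>\<G>" by blast
  show ?thesis
  proof (intro exI ballI)
    fix i assume i: "i \<in> I"
    show "L i x + d i \<notin> \<int>"
    proof
      assume "L i x + d i \<in> \<int>"
      then obtain m where "L i x + d i = of_int m" by (auto elim: Ints_cases)
      moreover have "x \<in> - {x. L i x = of_int m - d i}"
        using x i by (auto simp: \<G>_def)
      ultimately show False by auto
    qed
  qed
qed

lemma dist_Ints:
  fixes r :: real
  assumes "r \<notin> \<int>"
  shows "\<exists>\<delta>>0. \<forall>m\<in>\<int>. \<bar>r - m\<bar> \<ge> \<delta>"
proof -
  have f: "frac r > 0" "frac r < 1" using assms frac_ge_0 frac_lt_1 frac_eq_0_iff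
    by (metis less_eq_real_def) (rule frac_lt_1)
  show ?thesis
  proof (intro exI conjI ballI)
    show "min (frac r) (1 - frac r) > 0" using f by simp
    fix m :: real assume "m \<in> \<int>"
    then obtain z where m: "m = of_int z" by (auto elim: Ints_cases)
    have r: "r = of_int \<lfloor>r\<rfloor> + frac r" by (simp add: frac_def)
    show "\<bar>r - m\<bar> \<ge> min (frac r) (1 - frac r)"
    proof (cases "z \<le> \<lfloor>r\<rfloor>")
      case True
      then have "real_of_int z \<le> of_int \<lfloor>r\<rfloor>" by linarith
      then show ?thesis using r m f by linarith
    next
      case False
      then have "real_of_int z \<ge> of_int \<lfloor>r\<rfloor> + 1" by linarith
      then show ?thesis using r m f by linarith
    qed
  qed
qed


lemma not_W:
  fixes S :: "nat \<Rightarrow> (real^'n) set" and L :: "nat \<Rightarrow> real^'n \<Rightarrow> real"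
  assumes fin: "finite I" and bl: "\<And>i. i \<in> I \<Longrightarrow> bounded_linear (L i)"
    and nz: "\<And>i. i \<in> I \<Longrightarrow> \<exists>y. L i y \<noteq> 0"
    and lat: "\<And>i s. i \<in> I \<Longrightarrow> s \<in> S i \<Longrightarrow> L i s + d i \<in> \<int>"
    and zero: "\<And>i t. i \<in> I \<Longrightarrow> L i (t *\<^sub>R b) = 0"
  shows "\<exists>e>0. \<exists>x. \<not> dir_vis_well_defined (\<Union>i\<in>I. S i) e x b"
proof -
  obtain x where x: "\<And>i. i \<in> I \<Longrightarrow> L i x + d i \<notin> \<int>"
    using exists_nonint[of I L d] fin bl nz by blast
  have "\<forall>i\<in>I. \<exists>\<epsilon>>0. \<forall>t. \<forall>s\<in>S i. \<not> dist s (x + t *\<^sub>R b) < \<epsilon>"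
  proof
    fix i assume i: "i \<in> I"
    obtain \<delta> where \<delta>: "\<delta> > 0" "\<And>m. m \<in> \<int> \<Longrightarrow> \<bar>L i x + d i - m\<bar> \<ge> \<delta>"
      using dist_Ints[OF x[OF i]] by blast
    obtain K where K: "K > 0" "\<And>u. norm (L i u) \<le> norm u * K"
      using bounded_linear.pos_bounded[OF bl[OF i]] by blast
    have lin: "linear (L i)" using bl[OF i] bounded_linear.linear by blast
    show "\<exists>\<epsilon>>0. \<forall>t. \<forall>s\<in>S i. \<not> dist s (x + t *\<^sub>R b) < \<epsilon>"
    proof (intro exI conjI allI ballI notI)
      show "\<delta> / K > 0" using \<delta> K by simp
      fix t s assume s: "s \<in> S i" and d: "dist s (x + t *\<^sub>R b) < \<delta> / K"
      have "L i (x + t *\<^sub>R b - s) = L i x + d i - (L i s + d i)"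
        using lin zero[OF i, of t] by (simp add: linear_diff linear_add)
      moreover have "\<bar>L i (x + t *\<^sub>R b - s)\<bar> \<le> norm (x + t *\<^sub>R b - s) * K"
        using K(2) by (metis real_norm_def)
      moreover have "norm (x + t *\<^sub>R b - s) * K < \<delta>"
        using d K by (simp add: dist_norm norm_minus_commute pos_less_divide_eq)
      moreover have "\<bar>L i x + d i - (L i s + d i)\<bar> \<ge> \<delta>" using \<delta>(2)[OF lat[OF i s]] .
      ultimately show False by linarith
    qed
  qed
  then obtain \<epsilon> where \<epsilon>: "\<And>i. i \<in> I \<Longrightarrow> \<epsilon> i > 0"
    "\<And>i t s. i \<in> I \<Longrightarrow> s \<in> S i \<Longrightarrow> \<not> dist s (x + t *\<^sub>R b) < \<epsilon> i"
    by metis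
  define e where "e = Min (insert 1 (\<epsilon> ` I))"
  have e: "e > 0" unfolding e_def using fin \<epsilon>(1) by (subst Min_gr_iff) auto
  have le: "e \<le> \<epsilon> i" if "i \<in> I" for i unfolding e_def using fin that by (intro Min_le) auto
  show ?thesis
  proof (intro exI conjI)
    show "e > 0" by (fact e)
    show "\<not> dir_vis_well_defined (\<Union>i\<in>I. S i) e x b"
      unfolding dwd_iff
    proof clarsimp
      fix t i s assume "i \<in> I" "s \<in> S i" "dist s (x + t *\<^sub>R b) < e"
      then show False using \<epsilon>(2)[of i s t] le[of i] by linarith
    qed
  qed
qed


theorem lemma2p1:
  fixes k :: nat
    and M :: "nat \<Rightarrow> real^'n^'n"
    and g :: "nat \<Rightarrow> real^'n"
    and b :: "real^'n"
  assumes n2: "CARD('n) \<ge> 2"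
    and k1: "k \<ge> 1"
    and inv: "\<And>i. i \<in> {1..k} \<Longrightarrow> invertible (M i)"
    and b_unit: "norm b = 1"
  defines "G \<equiv> (\<lambda>i. shifted_lattice (M i) (g i))"
    and "F \<equiv> (\<Union>i\<in>{1..k}. shifted_lattice (M i) (g i))"
  shows "((\<forall>\<epsilon>>0. \<forall>x. dir_vis_well_defined F \<epsilon> x b)
            \<longleftrightarrow> (\<exists>i\<in>{1..k}. \<forall>\<epsilon>>0. \<forall>x. dir_vis_well_defined (G i) \<epsilon> x b))
       \<and> ((\<exists>i\<in>{1..k}. \<forall>\<epsilon>>0. \<forall>x. dir_vis_well_defined (G i) \<epsilon> x b)
            \<longleftrightarrow> (\<exists>i\<in>{1..k}. rationally_independent (matrix_inv (M i) *v b)))"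
proof -
  have iff: "(\<forall>\<epsilon>>0. \<forall>x. dir_vis_well_defined (G i) \<epsilon> x b) \<longleftrightarrow> rationally_independent (matrix_inv (M i) *v b)"
    if i: "i \<in> {1..k}" for i
  proof
    assume W: "\<forall>\<epsilon>>0. \<forall>x. dir_vis_well_defined (G i) \<epsilon> x b"
    show "rationally_independent (matrix_inv (M i) *v b)"
    proof (rule ccontr)
      assume "\<not> rationally_independent (matrix_inv (M i) *v b)"
      from A2[OF inv[OF i] this, of "g i"] obtain L :: "real^'n \<Rightarrow> real" and d where
        Ld: "bounded_linear L" "\<exists>y. L y \<noteq> 0" "\<forall>s\<in>shifted_lattice (M i) (g i). L s + d \<in> \<int>"
          "\<forall>t. L (t *\<^sub>R b) = 0" by blast
      have "\<exists>e>0. \<exists>x. \<not> dir_vis_well_defined (\<Union>j\<in>{i}. G i) e x b"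
        by (rule not_W[where L="\<lambda>_. L" and d="\<lambda>_. d"]) (use Ld in \<open>auto simp: G_def\<close>)
      then show False using W by auto
    qed
  next
    assume "rationally_independent (matrix_inv (M i) *v b)"
    then show "\<forall>\<epsilon>>0. \<forall>x. dir_vis_well_defined (G i) \<epsilon> x b"
      using A1[OF inv[OF i]] by (simp add: G_def)
  qed
  have A: "(\<forall>\<epsilon>>0. \<forall>x. dir_vis_well_defined F \<epsilon> x b)
            \<longleftrightarrow> (\<exists>i\<in>{1..k}. \<forall>\<epsilon>>0. \<forall>x. dir_vis_well_defined (G i) \<epsilon> x b)"
  proof
    assume W: "\<forall>\<epsilon>>0. \<forall>x. dir_vis_well_defined F \<epsilon> x b"
    show "\<exists>i\<in>{1..k}. \<forall>\<epsilon>>0. \<forall>x. dir_vis_well_defined (G i) \<epsilon> x b"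
    proof (rule ccontr)
      assume "\<not> ?thesis"
      then have nri: "\<forall>i\<in>{1..k}. \<not> rationally_independent (matrix_inv (M i) *v b)"
        using iff by blast
      have "\<forall>i\<in>{1..k}. \<exists>(L::real^'n \<Rightarrow> real) d. bounded_linear L \<and> (\<exists>y. L y \<noteq> 0) \<and>
          (\<forall>s\<in>shifted_lattice (M i) (g i). L s + d \<in> \<int>) \<and> (\<forall>t. L (t *\<^sub>R b) = 0)"
        using A2 inv nri by blast
      then obtain L :: "nat \<Rightarrow> real^'n \<Rightarrow> real" and d where
        Ld: "\<And>i. i \<in> {1..k} \<Longrightarrow> bounded_linear (L i) \<and> (\<exists>y. L i y \<noteq> 0) \<and>
          (\<forall>s\<in>shifted_lattice (M i) (g i). L i s + d i \<in> \<int>) \<and> (\<forall>t. L i (t *\<^sub>R b) = 0)"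
        by metis
      have "\<exists>e>0. \<exists>x. \<not> dir_vis_well_defined (\<Union>i\<in>{1..k}. shifted_lattice (M i) (g i)) e x b"
        by (rule not_W[where L=L and d=d]) (use Ld in auto)
      then show False using W unfolding F_def by blast
    qed
  next
    assume "\<exists>i\<in>{1..k}. \<forall>\<epsilon>>0. \<forall>x. dir_vis_well_defined (G i) \<epsilon> x b"
    then obtain i where i: "i \<in> {1..k}" and W: "\<forall>\<epsilon>>0. \<forall>x. dir_vis_well_defined (G i) \<epsilon> x b"
      by blast
    have sub: "G i \<subseteq> F" using i by (auto simp: G_def F_def)
    show "\<forall>\<epsilon>>0. \<forall>x. dir_vis_well_defined F \<epsilon> x b"
      using W sub unfolding dwd_iff by blast
  qed
  show ?thesis using A iff by blast
qed

end
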